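(* Let $S$ be a $d$-dimensional quantum system ($d<\infty$) with Hamiltonian $H_S=\sum_{i=0}^{d-1}E_S^{(i)}|i\rangle\langle i|$, $0=E_S^{(0)}\le E_S^{(1)}\le\dots$, initially in the thermal state $\tau_S(\beta,H_S)$, and let $\lambda>1$. For $N\in\mathbb{N}$, consider $N$ machines $M_1,\dots,M_N$, each a $d$-dimensional system with an arbitrary (freely chosen) Hamiltonian $H_{M_n}$, each initially in the thermal state $\tau(\beta,H_{M_n})$ at the same inverse temperature $\beta$, and uncorrelated with each other and with $S$. The cooling is implemented by the global unitary $U=\mathbb{S}_N\cdots\mathbb{S}_2\mathbb{S}_1$, where $\mathbb{S}_n$ swaps the state of $S$ with that of $M_n$ (in their energy eigenbases ordered by non-decreasing energy), and the machine Hamiltonians are chosen such that the final state of $S$ is $\tau_S(\lambda\beta,H_S)$. Then the minimum, over all such choices of machine Hamiltonians $\{H_{M_n}\}_{n=1}^N$, of the (scaled) energy cost satisfies $$\beta\,\Delta E_M=\widetilde{\Delta}S_S+\frac{1}{2N}(\mathcal{L}^* )^2+\mathcal{O}(N^{-2})\quad (N\to\infty),$$ where $$\mathcal{L}^*=2\arccos\Big(\mathrm{tr}\Big[\sqrt{\tau_S(\beta,H_S)}\sqrt{\tau_S(\lambda\beta,H_S)}\Big]\Big)=2\arccos\left(\frac{\mathcal{Z}(\beta(1+\lambda)/2)}{\sqrt{\mathcal{Z}(\beta)\mathcal{Z}(\lambda\beta)}}\right).$$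
   Context: For a Hamiltonian $H$, the thermal (Gibbs) state at inverse temperature $\beta$ is $\tau(\beta,H)=e^{-\beta H}/\mathcal{Z}(\beta)$ with partition function $\mathcal{Z}(\beta)=\mathrm{tr}[e^{-\beta H}]$; in the formula for $\mathcal{L}^*$, $\mathcal{Z}$ is the partition function of $H_S$. The von Neumann entropy is $S(\varrho)=-\mathrm{tr}[\varrho\log\varrho]$, and $\widetilde{\Delta}S_S:=S(\tau_S(\beta,H_S))-S(\tau_S(\lambda\beta,H_S))$ is the entropy decrease of the target. With $H_M=\sum_n H_{M_n}$ (each acting on its own factor) and $\varrho_M,\varrho'_M$ the initial and final joint machine states, $\Delta E_M:=\mathrm{tr}[H_M(\varrho'_M-\varrho_M)]$ is the heat dissipated into the machines. The constants in $\mathcal{O}(N^{-2})$ depend on $H_S,\beta,\lambda$ but not on $N$. *)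

theory Defs
  imports Complex_Main "HOL-Library.FuncSet" "HOL-Library.Landau_Symbols"
begin

text \<open>All Hamiltonians are represented by their spectra, labelled in their energy
  eigenbases (indices 0..d-1). All states occurring in the protocol are diagonal in the
  product energy eigenbasis, so a (joint) state is represented by its diagonal, i.e. a
  function on basis configurations.\<close>

definition sorted_spec :: "nat \<Rightarrow> (nat \<Rightarrow> real) \<Rightarrow> bool" where
  "sorted_spec d E = (\<forall>i j. i \<le> j \<longrightarrow> j < d \<longrightarrow> E i \<le> E j)"

definition partition_fn :: "nat \<Rightarrow> (nat \<Rightarrow> real) \<Rightarrow> real \<Rightarrow> real" where
  "partition_fn d E b = (\<Sum>j<d. exp (- b * E j))"

definition thermal :: "nat \<Rightarrow> real \<Rightarrow> (nat \<Rightarrow> real) \<Rightarrow> nat \<Rightarrow> real" where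
  "thermal d b E i = exp (- b * E i) / partition_fn d E b"

definition entropy :: "nat \<Rightarrow> (nat \<Rightarrow> real) \<Rightarrow> real" where
  "entropy d p = - (\<Sum>i<d. p i * ln (p i))"

text \<open>Basis configurations of S (index 0) and machines M_1..M_N (indices 1..N).\<close>
definition confs :: "nat \<Rightarrow> nat \<Rightarrow> (nat \<Rightarrow> nat) set" where
  "confs d N = {0..N} \<rightarrow>\<^sub>E {..<d}"

definition swap_conf :: "nat \<Rightarrow> (nat \<Rightarrow> nat) \<Rightarrow> (nat \<Rightarrow> nat)" where
  "swap_conf n c = c(0 := c n, n := c 0)"

text \<open>Initial uncorrelated product of thermal states; EM n is the spectrum of H_{M_n}.\<close>
definition initial_state ::
  "nat \<Rightarrow> real \<Rightarrow> (nat \<Rightarrow> real) \<Rightarrow> (nat \<Rightarrow> nat \<Rightarrow> real) \<Rightarrow> nat \<Rightarrow> (nat \<Rightarrow> nat) \<Rightarrow> real" where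
  "initial_state d b ES EM N c =
     (\<Prod>k\<in>{0..N}. thermal d b (if k = 0 then ES else EM k) (c k))"

text \<open>Applying S_n ... S_1 (S_1 first): the diagonal of U rho U^dagger.\<close>
primrec evolve :: "nat \<Rightarrow> ((nat \<Rightarrow> nat) \<Rightarrow> real) \<Rightarrow> (nat \<Rightarrow> nat) \<Rightarrow> real" where
  "evolve 0 P = P"
| "evolve (Suc n) P = (\<lambda>c. evolve n P (swap_conf (Suc n) c))"

definition final_state ::
  "nat \<Rightarrow> real \<Rightarrow> (nat \<Rightarrow> real) \<Rightarrow> (nat \<Rightarrow> nat \<Rightarrow> real) \<Rightarrow> nat \<Rightarrow> (nat \<Rightarrow> nat) \<Rightarrow> real" where
  "final_state d b ES EM N = evolve N (initial_state d b ES EM N)"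

definition energy_M :: "nat \<Rightarrow> (nat \<Rightarrow> nat \<Rightarrow> real) \<Rightarrow> (nat \<Rightarrow> nat) \<Rightarrow> real" where
  "energy_M N EM c = (\<Sum>n\<in>{1..N}. EM n (c n))"

definition Delta_E_M ::
  "nat \<Rightarrow> real \<Rightarrow> (nat \<Rightarrow> real) \<Rightarrow> (nat \<Rightarrow> nat \<Rightarrow> real) \<Rightarrow> nat \<Rightarrow> real" where
  "Delta_E_M d b ES EM N =
     (\<Sum>c\<in>confs d N. energy_M N EM c * (final_state d b ES EM N c - initial_state d b ES EM N c))"

text \<open>Eigenvalues of the final reduced state of S (diagonal of the partial trace).\<close>
definition final_S_pop ::
  "nat \<Rightarrow> real \<Rightarrow> (nat \<Rightarrow> real) \<Rightarrow> (nat \<Rightarrow> nat \<Rightarrow> real) \<Rightarrow> nat \<Rightarrow> nat \<Rightarrow> real" where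
  "final_S_pop d b ES EM N i = (\<Sum>c\<in>{c\<in>confs d N. c 0 = i}. final_state d b ES EM N c)"

definition admissible ::
  "nat \<Rightarrow> real \<Rightarrow> real \<Rightarrow> (nat \<Rightarrow> real) \<Rightarrow> nat \<Rightarrow> (nat \<Rightarrow> nat \<Rightarrow> real) \<Rightarrow> bool" where
  "admissible d b lam ES N EM =
     ((\<forall>n\<in>{1..N}. sorted_spec d (EM n)) \<and>
      (\<forall>i<d. final_S_pop d b ES EM N i = thermal d (lam * b) ES i))"

definition min_cost :: "nat \<Rightarrow> real \<Rightarrow> real \<Rightarrow> (nat \<Rightarrow> real) \<Rightarrow> nat \<Rightarrow> real" where
  "min_cost d b lam ES N =
     Inf {b * Delta_E_M d b ES EM N | EM. admissible d b lam ES N EM}"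

text \<open>L* = 2 arccos tr[sqrt tau_S(b) sqrt tau_S(lam b)] for the commuting diagonal states.\<close>
definition Lstar :: "nat \<Rightarrow> real \<Rightarrow> real \<Rightarrow> (nat \<Rightarrow> real) \<Rightarrow> real" where
  "Lstar d b lam ES =
     2 * arccos (\<Sum>i<d. sqrt (thermal d b ES i) * sqrt (thermal d (lam * b) ES i))"

end

theory Submission
  imports Defs
begin


definition shiftc :: "nat \<Rightarrow> (nat \<Rightarrow> nat) \<Rightarrow> nat \<Rightarrow> nat" where
  "shiftc n c = (\<lambda>k. if k = 0 then (if n = 0 then c 0 else c 1) else if k < n then c (k+1)
      else if k = n then c 0 else c k)"

lemma evolve_shift: "evolve n P c = P (shiftc n c)"
proof (induction n arbitrary: c)
  case 0
  have "shiftc 0 c = c" by (auto simp: shiftc_def fun_eq_iff)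
  then show ?case by simp
next
  case (Suc n)
  have "shiftc n (swap_conf (Suc n) c) = shiftc (Suc n) c"
    by (auto simp: shiftc_def swap_conf_def fun_eq_iff less_Suc_eq)
  then show ?case using Suc by simp
qed

lemma marginal:
  fixes f :: "nat \<Rightarrow> nat \<Rightarrow> real"
  assumes "finite I" "j \<in> I" "finite A" "\<And>k. k \<in> I \<Longrightarrow> (\<Sum>x\<in>A. f k x) = 1"
  shows "(\<Sum>c\<in>PiE I (\<lambda>_. A). h (c j) * (\<Prod>k\<in>I. f k (c k))) = (\<Sum>x\<in>A. h x * f j x)"
proof -
  let ?g = "\<lambda>k x. if k = j then h x * f k x else f k x"
  have "(\<Prod>k\<in>I. \<Sum>x\<in>A. ?g k x) = (\<Sum>c\<in>PiE I (\<lambda>_. A). \<Prod>k\<in>I. ?g k (c k))"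
    by (rule prod_sum_PiE) (use assms in auto)
  moreover have "(\<Prod>k\<in>I. \<Sum>x\<in>A. ?g k x) = (\<Sum>x\<in>A. h x * f j x)"
  proof -
    have "(\<Prod>k\<in>I. \<Sum>x\<in>A. ?g k x) = (\<Sum>x\<in>A. ?g j x) * (\<Prod>k\<in>I-{j}. \<Sum>x\<in>A. ?g k x)"
      using assms by (simp add: prod.remove)
    also have "(\<Prod>k\<in>I-{j}. \<Sum>x\<in>A. ?g k x) = 1"
      using assms by (intro prod.neutral) auto
    finally show ?thesis by simp
  qed
  moreover have "\<And>c. (\<Prod>k\<in>I. ?g k (c k)) = h (c j) * (\<Prod>k\<in>I. f k (c k))"
  proof -
    fix c
    have "(\<Prod>k\<in>I. ?g k (c k)) = ?g j (c j) * (\<Prod>k\<in>I-{j}. ?g k (c k))"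
      using assms by (simp add: prod.remove)
    also have "(\<Prod>k\<in>I-{j}. ?g k (c k)) = (\<Prod>k\<in>I-{j}. f k (c k))"
      by (intro prod.cong) auto
    also have "(\<Prod>k\<in>I. f k (c k)) = f j (c j) * (\<Prod>k\<in>I-{j}. f k (c k))"
      using assms by (simp add: prod.remove)
    ultimately show "(\<Prod>k\<in>I. ?g k (c k)) = h (c j) * (\<Prod>k\<in>I. f k (c k))" by simp
  qed
  ultimately show ?thesis by simp
qed

lemma partition_pos: "d \<ge> 1 \<Longrightarrow> partition_fn d E b > 0"
  unfolding partition_fn_def by (intro sum_pos) (auto simp: lessThan_empty_iff)

lemma thermal_pos: "d \<ge> 1 \<Longrightarrow> thermal d b E i > 0"
  unfolding thermal_def using partition_pos[of d E b] by simp

lemma thermal_sum: "d \<ge> 1 \<Longrightarrow> (\<Sum>i<d. thermal d b E i) = 1"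
  unfolding thermal_def using partition_pos[of d E b]
  by (simp add: sum_divide_distrib[symmetric] partition_fn_def)

definition TH :: "(nat \<Rightarrow> real) \<Rightarrow> (nat \<Rightarrow> nat \<Rightarrow> real) \<Rightarrow> nat \<Rightarrow> nat \<Rightarrow> nat \<Rightarrow> real" where
  "TH ES EM N j = (if j = 0 then EM N else if j = 1 then ES else EM (j - 1))"

lemma final_prod:
  assumes "N \<ge> 1"
  shows "final_state d b ES EM N c = (\<Prod>j\<in>{0..N}. thermal d b (TH ES EM N j) (c j))"
proof -
  define \<sigma> where "\<sigma> = (\<lambda>k::nat. if k = N then 0 else k + 1)"
  define \<tau> where "\<tau> = (\<lambda>k::nat. if k = 0 then N else k - 1)"
  have bij: "bij_betw \<sigma> {0..N} {0..N}"
    by (rule bij_betw_byWitness[where f'=\<tau>]) (use assms in \<open>auto simp: \<sigma>_def \<tau>_def\<close>)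
  have sh: "shiftc N c k = c (\<sigma> k)" if "k \<in> {0..N}" for k
    using that assms by (auto simp: shiftc_def \<sigma>_def)
  have "final_state d b ES EM N c = (\<Prod>k\<in>{0..N}. thermal d b (if k = 0 then ES else EM k) (shiftc N c k))"
    by (simp add: final_state_def evolve_shift initial_state_def)
  also have "\<dots> = (\<Prod>k\<in>{0..N}. (\<lambda>j. thermal d b (TH ES EM N j) (c j)) (\<sigma> k))"
    by (intro prod.cong refl) (use assms in \<open>auto simp: sh TH_def \<sigma>_def\<close>)
  also have "\<dots> = (\<Prod>j\<in>{0..N}. thermal d b (TH ES EM N j) (c j))"
    by (rule prod.reindex_bij_betw[OF bij])
  finally show ?thesis .
qed

lemma sum_energy:
  assumes "d \<ge> 1" "\<And>c. c \<in> confs d N \<Longrightarrow> F c = (\<Prod>j\<in>{0..N}. thermal d b (G j) (c j))"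
  shows "(\<Sum>c\<in>confs d N. energy_M N EM c * F c) = (\<Sum>n\<in>{1..N}. \<Sum>i<d. EM n i * thermal d b (G n) i)"
proof -
  have "(\<Sum>c\<in>confs d N. energy_M N EM c * F c) = (\<Sum>c\<in>confs d N. \<Sum>n\<in>{1..N}. EM n (c n) * (\<Prod>j\<in>{0..N}. thermal d b (G j) (c j)))"
    by (intro sum.cong refl) (simp add: assms energy_M_def sum_distrib_right)
  also have "\<dots> = (\<Sum>n\<in>{1..N}. \<Sum>c\<in>confs d N. EM n (c n) * (\<Prod>j\<in>{0..N}. thermal d b (G j) (c j)))"
    by (rule sum.swap)
  also have "\<dots> = (\<Sum>n\<in>{1..N}. \<Sum>i<d. EM n i * thermal d b (G n) i)"
    unfolding confs_def
    by (intro sum.cong refl marginal) (use assms thermal_sum in auto)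
  finally show ?thesis .
qed

lemma DeltaE:
  assumes "d \<ge> 1" "N \<ge> 1"
  shows "Delta_E_M d b ES EM N = (\<Sum>n\<in>{1..N}. \<Sum>i<d. EM n i *
            (thermal d b (if n = 1 then ES else EM (n - 1)) i - thermal d b (EM n) i))"
proof -
  have "Delta_E_M d b ES EM N = (\<Sum>c\<in>confs d N. energy_M N EM c * final_state d b ES EM N c)
       - (\<Sum>c\<in>confs d N. energy_M N EM c * initial_state d b ES EM N c)"
    by (simp add: Delta_E_M_def algebra_simps sum_subtractf)
  also have "(\<Sum>c\<in>confs d N. energy_M N EM c * final_state d b ES EM N c)
     = (\<Sum>n\<in>{1..N}. \<Sum>i<d. EM n i * thermal d b (TH ES EM N n) i)"
    by (rule sum_energy) (use assms final_prod in auto)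
  also have "(\<Sum>c\<in>confs d N. energy_M N EM c * initial_state d b ES EM N c)
     = (\<Sum>n\<in>{1..N}. \<Sum>i<d. EM n i * thermal d b (if n = 0 then ES else EM n) i)"
    by (rule sum_energy) (use assms in \<open>auto simp: initial_state_def\<close>)
  finally show ?thesis
    by (simp add: sum_subtractf[symmetric] algebra_simps TH_def)
qed

lemma final_pop:
  assumes "d \<ge> 1" "N \<ge> 1" "i < d"
  shows "final_S_pop d b ES EM N i = thermal d b (EM N) i"
proof -
  have "final_S_pop d b ES EM N i = (\<Sum>c\<in>confs d N. (if c 0 = i then 1 else 0) * final_state d b ES EM N c)"
  proof -
    have fin: "finite (confs d N)" by (simp add: confs_def finite_PiE)
    show ?thesis unfolding final_S_pop_def sum.inter_filter[OF fin]
      by (intro sum.cong) auto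
  qed
  also have "\<dots> = (\<Sum>c\<in>confs d N. (if c 0 = i then 1 else 0) * (\<Prod>j\<in>{0..N}. thermal d b (TH ES EM N j) (c j)))"
    using assms final_prod by simp
  also have "\<dots> = (\<Sum>x<d. (if x = i then 1 else 0) * thermal d b (TH ES EM N 0) x)"
    unfolding confs_def by (rule marginal) (use assms thermal_sum in auto)
  also have "\<dots> = thermal d b (EM N) i"
    using assms by (simp add: TH_def if_distrib[of "\<lambda>x. x * _"] cong: if_cong)
  finally show ?thesis .
qed



definition kl :: "nat \<Rightarrow> (nat \<Rightarrow> real) \<Rightarrow> (nat \<Rightarrow> real) \<Rightarrow> real" where
  "kl d p q = (\<Sum>i<d. p i * (ln (p i) - ln (q i)))"

lemma ln_thermal: "d \<ge> 1 \<Longrightarrow> ln (thermal d b E i) = - b * E i - ln (partition_fn d E b)"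
  unfolding thermal_def using partition_pos[of d E b] by (simp add: ln_div)

lemma step_cost:
  assumes "d \<ge> 1" and that: "(\<Sum>i<d. P i) = 1"
  shows "b * (\<Sum>i<d. E i * (P i - thermal d b E i)) =
     kl d P (thermal d b E) + entropy d P - entropy d (thermal d b E)"
proof -
  let ?Q = "thermal d b E" and ?Z = "ln (partition_fn d E b)"
  have "b * (\<Sum>i<d. E i * (P i - ?Q i)) = (\<Sum>i<d. (- ln (?Q i) - ?Z) * (P i - ?Q i))"
    by (simp add: sum_distrib_left ln_thermal[OF assms(1)] algebra_simps)
  also have "\<dots> = (\<Sum>i<d. - ln (?Q i) * (P i - ?Q i)) - ?Z * ((\<Sum>i<d. P i) - (\<Sum>i<d. ?Q i))"
    by (simp add: algebra_simps sum_subtractf sum_distrib_left sum_distrib_right sum.distrib)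
  also have "(\<Sum>i<d. P i) - (\<Sum>i<d. ?Q i) = 0" using that thermal_sum[OF assms(1)] by simp
  finally show ?thesis
    by (simp add: kl_def entropy_def algebra_simps sum_subtractf sum_distrib_left)
qed

lemma cost_formula:
  fixes b :: real and ES :: "nat \<Rightarrow> real" and EM :: "nat \<Rightarrow> nat \<Rightarrow> real"
  assumes "d \<ge> 1" "N \<ge> 1"
  defines "Q \<equiv> (\<lambda>n. thermal d b (if n = 0 then ES else EM n))"
  shows "b * Delta_E_M d b ES EM N = entropy d (Q 0) - entropy d (Q N) + (\<Sum>n<N. kl d (Q n) (Q (Suc n)))"
proof -
  have "b * Delta_E_M d b ES EM N = (\<Sum>n<N. b * (\<Sum>i<d. EM (Suc n) i * (Q n i - thermal d b (EM (Suc n)) i)))"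
  proof -
    have e: "(\<Sum>n\<in>{1..N}. f n) = (\<Sum>n<N. f (Suc n))" for f :: "nat \<Rightarrow> real"
      using sum.atLeast1_atMost_eq[of f N] by simp
    show ?thesis
      unfolding DeltaE[OF assms(1,2)] e sum_distrib_left
      by (intro sum.cong refl) (simp add: Q_def)
  qed
  also have "\<dots> = (\<Sum>n<N. kl d (Q n) (Q (Suc n)) + (entropy d (Q n) - entropy d (Q (Suc n))))"
    by (intro sum.cong refl, subst step_cost) (use assms thermal_sum in \<open>auto simp: Q_def\<close>)
  also have "\<dots> = (\<Sum>n<N. kl d (Q n) (Q (Suc n))) + (entropy d (Q 0) - entropy d (Q N))"
    by (simp add: sum.distrib sum_lessThan_telescope'[of "\<lambda>n. entropy d (Q n)" N])
  finally show ?thesis by simp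
qed



lemma ln_cubic:
  fixes y :: real assumes "y > 0"
  shows "ln y \<le> (y-1) - (y-1)^2/2 + (y-1)^3/3"
proof -
  define f where "f = (\<lambda>y::real. (y-1) - (y-1)^2/2 + (y-1)^3/3 - ln y)"
  have D: "DERIV f x :> (x-1)^3/x" if "x > 0" for x
  proof -
    have "DERIV f x :> 1 - (x-1) + (x-1)^2 - 1/x"
      unfolding f_def using that
      by (auto intro!: derivative_eq_intros simp: power2_eq_square field_simps)
    moreover have "1 - (x-1) + (x-1)^2 - 1/x = (x-1)^3/x"
      using that by (simp add: field_simps power2_eq_square power3_eq_cube)
    ultimately show ?thesis by simp
  qed
  have f1: "f 1 = 0" by (simp add: f_def)
  show ?thesis
  proof (cases "y \<ge> 1")
    case True
    have "f 1 \<le> f y"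
    proof (rule DERIV_nonneg_imp_nondecreasing[of 1 y f, OF True])
      fix x :: real assume "1 \<le> x" "x \<le> y"
      then show "\<exists>z. DERIV f x :> z \<and> z \<ge> 0" using D[of x] by auto
    qed
    then show ?thesis using f1 by (simp add: f_def)
  next
    case False
    have "f y \<ge> f 1"
    proof (rule DERIV_nonpos_imp_nonincreasing[of y 1 f])
      show "y \<le> 1" using False by simp
      fix x assume x: "y \<le> x" "x \<le> 1"
      then have "(x-1)^3 \<le> 0" by (simp add: power_le_zero_eq_numeral)
      then show "\<exists>z. DERIV f x :> z \<and> z \<le> 0" using D[of x] x assms
        by (intro exI[of _ "(x-1)^3/x"]) (auto simp: divide_nonpos_pos)
    qed
    then show ?thesis using f1 by (simp add: f_def)
  qed
qed

lemma ln_ge_1_minus_inv: "y > 0 \<Longrightarrow> 1 - 1/y \<le> ln (y::real)"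
  using ln_le_minus_one[of "1/y"] by (simp add: ln_div)

lemma one_minus_cos_le: "1 - cos h \<le> (h::real)^2/2"
proof -
  have "1 - cos h = 2 * (sin (h/2))^2"
    using cos_double_sin[of "h/2"] by simp
  also have "\<dots> \<le> 2 * (h/2)^2"
  proof -
    have "(sin (h/2))^2 \<le> (h/2)^2" using abs_le_square_iff abs_sin_x_le_abs_x by blast
    then show ?thesis by simp
  qed
  finally show ?thesis by (simp add: power2_eq_square)
qed

lemma one_minus_cos_ge:
  fixes h :: real
  assumes "0 \<le> h" "h \<le> 1"
  shows "h^2/2 - h^4/24 \<le> 1 - cos h"
proof -
  have "\<bar>sin (h/2) - (\<Sum>m<3. sin_coeff m * (h/2) ^ m)\<bar> \<le> inverse (fact 3) * \<bar>h/2\<bar> ^ 3"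
    by (rule Maclaurin_sin_bound)
  then have "\<bar>sin (h/2) - h/2\<bar> \<le> (h/2)^3/6"
    using assms by (simp add: sin_coeff_def numeral_3_eq_3 fact_numeral power3_eq_cube)
  then have s: "h/2 - (h/2)^3/6 \<le> sin (h/2)"
    by (simp only: abs_le_iff) linarith
  have nn: "0 \<le> h/2 - (h/2)^3/6"
  proof -
    have "(h/2)^3 \<le> (h/2)^1" using assms by (intro power_decreasing) auto
    then have "(h/2)^3 \<le> h/2" by simp
    then show ?thesis using assms by linarith
  qed
  have "(h/2 - (h/2)^3/6)^2 \<le> (sin (h/2))^2"
    using s nn by (intro power_mono) auto
  moreover have "1 - cos h = 2 * (sin (h/2))^2"
    using cos_double_sin[of "h/2"] by simp
  moreover have "h^2/2 - h^4/24 \<le> 2 * (h/2 - (h/2)^3/6)^2"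
  proof -
    have "2 * (h/2 - (h/2)^3/6)^2 = h^2/2 - h^4/24 + h^6/1152"
      by (simp add: power2_eq_square field_simps) (simp add: algebra_simps power_def)
    moreover have "0 \<le> h^6" using assms by simp
    ultimately show ?thesis by linarith
  qed
  ultimately show ?thesis by linarith
qed

lemma pow_abs_bound:
  fixes e E :: real
  assumes "\<bar>e\<bar> \<le> E" "E \<le> 1"
  shows "e^3/3 + e^4/6 + e^5/3 \<le> E^3"
proof -
  have E0: "0 \<le> E" using assms by linarith
  have a3: "\<bar>e\<bar>^3 \<le> E^3" using assms by (intro power_mono) auto
  have a4: "\<bar>e\<bar>^4 \<le> E^3"
  proof -
    have "\<bar>e\<bar>^4 \<le> E^4" using assms by (intro power_mono) auto
    also have "E^4 \<le> E^3" using assms E0 by (intro power_decreasing) auto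
    finally show ?thesis .
  qed
  have a5: "\<bar>e\<bar>^5 \<le> E^3"
  proof -
    have "\<bar>e\<bar>^5 \<le> E^5" using assms by (intro power_mono) auto
    also have "E^5 \<le> E^3" using assms E0 by (intro power_decreasing) auto
    finally show ?thesis .
  qed
  have "e^3 \<le> \<bar>e\<bar>^3" "e^4 \<le> \<bar>e\<bar>^4" "e^5 \<le> \<bar>e\<bar>^5"
    by (metis abs_ge_self power_abs)+
  moreover have "0 \<le> E^3" using E0 by simp
  ultimately show ?thesis using a3 a4 a5 by linarith
qed

lemma kl_point_upper:
  fixes x y E :: real
  assumes "x > 0" "y > 0" "\<bar>x - y\<bar> \<le> E * y" "E \<le> 1"
  shows "x^2 * (ln (x^2) - ln (y^2)) \<le> 2 * (x*y - y^2) + 3 * (x - y)^2 + 2 * y^2 * E^3"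
proof -
  define e where "e = x / y - 1"
  have xe: "x = y * (1 + e)" using assms by (simp add: e_def field_simps)
  have ee: "\<bar>e\<bar> \<le> E"
  proof -
    have "\<bar>e\<bar> = \<bar>x - y\<bar> / y" using assms by (simp add: e_def field_simps abs_div)
    also have "\<dots> \<le> E" using assms by (simp add: divide_le_eq)
    finally show ?thesis .
  qed
  have e1: "1 + e > 0" using assms by (simp add: e_def)
  have "ln (x^2) = ln (y^2) + ln ((1+e)^2)"
    unfolding xe power_mult_distrib using assms e1 by (simp add: ln_mult)
  moreover have "ln ((1+e)^2) = 2 * ln (1 + e)" using e1 by (simp add: ln_realpow)
  ultimately have "ln (x^2) - ln (y^2) = 2 * ln (1 + e)" by simp
  moreover have "ln (1 + e) \<le> e - e^2/2 + e^3/3"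
    using ln_cubic[of "1+e"] assms xe by (simp add: zero_less_mult_iff)
  ultimately have "x^2 * (ln (x^2) - ln (y^2)) \<le> x^2 * (2 * (e - e^2/2 + e^3/3))"
    by (intro mult_left_mono) auto
  also have "\<dots> = 2 * y^2 * (e + 3/2 * e^2) + 2 * y^2 * (e^3/3 + e^4/6 + e^5/3)"
    unfolding xe by (simp add: algebra_simps power2_eq_square power3_eq_cube power4_eq_xxxx power_def)
  also have "\<dots> \<le> 2 * y^2 * (e + 3/2 * e^2) + 2 * y^2 * E^3"
    using pow_abs_bound[OF ee assms(4)] by (intro add_left_mono mult_left_mono) auto
  also have "2 * y^2 * (e + 3/2 * e^2) = 2 * (x*y - y^2) + 3 * (x - y)^2"
    unfolding xe by (simp add: algebra_simps power2_eq_square)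
  finally show ?thesis .
qed

lemma lo_alg:
  fixes e dl E z :: real
  assumes "z = e + dl" "\<bar>e\<bar> \<le> E" "0 \<le> dl"
  shows "2*z + z^2 + 2/3 * z^3 - (1 + e)^2 \<ge> -1 + 2*dl - 2*E*dl - 2/3*(E + dl)^3"
proof -
  have "\<bar>z\<bar> \<le> E + dl" using assms by linarith
  then have "\<bar>z\<bar>^3 \<le> (E + dl)^3" by (intro power_mono) auto
  moreover have "- (\<bar>z\<bar>^3) \<le> z^3"
    by (metis abs_ge_minus_self power_abs minus_le_iff)
  moreover have "-(E*dl) \<le> e * dl"
  proof -
    have "\<bar>e * dl\<bar> \<le> E * dl" using assms by (simp add: abs_mult mult_right_mono)
    then show ?thesis by linarith
  qed
  moreover have "2*z + z^2 + 2/3 * z^3 - (1 + e)^2 = -1 + 2*dl + 2*e*dl + dl^2 + 2/3 * z^3"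
    using assms(1) by (simp add: algebra_simps power2_eq_square)
  moreover have "0 \<le> dl^2" by simp
  ultimately show ?thesis by linarith
qed

lemma lo_point:
  fixes a b c k E :: real
  assumes "a > 0" "b > 0" "c > 0" "a + c = 2 * k * b" "\<bar>a / b - 1\<bar> \<le> E" "k \<le> 1"
  shows "ln (b^2 / c^2) - a^2 / b^2 \<ge> -1 + 2*(2-2*k) - 2*E*(2-2*k) - 2/3*(E + (2-2*k))^3"
proof -
  define y where "y = c / b"
  define e where "e = a / b - 1"
  define z where "z = e + (2 - 2*k)"
  have y: "y = 1 - z"
  proof -
    have "c = 2 * k * b - a" using assms by linarith
    then show ?thesis using assms by (simp add: y_def z_def e_def field_simps)
  qed
  have ypos: "y > 0" using assms by (simp add: y_def)
  have "ln (b^2 / c^2) = - 2 * ln y"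
    using assms by (simp add: y_def ln_div ln_realpow)
  moreover have "ln y \<le> (y-1) - (y-1)^2/2 + (y-1)^3/3" by (rule ln_cubic[OF ypos])
  moreover have "a^2 / b^2 = (1 + e)^2" using assms by (simp add: e_def power_divide)
  ultimately have "ln (b^2 / c^2) - a^2 / b^2 \<ge> 2*z + z^2 + 2/3 * z^3 - (1 + e)^2"
    unfolding y by (simp add: algebra_simps power2_eq_square power3_eq_cube)
  moreover have "2*z + z^2 + 2/3 * z^3 - (1 + e)^2 \<ge> -1 + 2*(2-2*k) - 2*E*(2-2*k) - 2/3*(E + (2-2*k))^3"
    by (rule lo_alg) (use assms in \<open>auto simp: z_def e_def\<close>)
  ultimately show ?thesis by linarith
qed

lemma kl_point_lower:
  fixes p q r :: real
  assumes "p > 0" "q > 0" "r > 0"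
  shows "p * (ln p - ln q) \<ge> p * ln r + p - r * q"
proof -
  have "ln (r * q / p) \<le> r * q / p - 1" by (rule ln_le_minus_one) (use assms in simp)
  then have "ln r + ln q - ln p \<le> r * q / p - 1" using assms by (simp add: ln_mult ln_div)
  then have "p * (ln r + ln q - ln p) \<le> p * (r * q / p - 1)" using assms by (intro mult_left_mono) auto
  then show ?thesis using assms by (simp add: algebra_simps)
qed



lemma X_lip:
  fixes X :: "nat \<Rightarrow> nat \<Rightarrow> real"
  assumes "(\<Sum>i<d. (X n i)^2) = 1" "(\<Sum>i<d. (X (Suc n) i)^2) = 1"
    "(\<Sum>i<d. X n i * X (Suc n) i) = cos h" "i < d"
  shows "\<bar>X n i - X (Suc n) i\<bar> \<le> \<bar>h\<bar>"
proof -
  have "(X n i - X (Suc n) i)^2 \<le> (\<Sum>j<d. (X n j - X (Suc n) j)^2)"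
    using assms(4) by (intro member_le_sum) auto
  also have "\<dots> = (\<Sum>j<d. (X n j)^2) - 2 * (\<Sum>j<d. X n j * X (Suc n) j) + (\<Sum>j<d. (X (Suc n) j)^2)"
    by (simp add: power2_diff sum.distrib sum_subtractf sum_distrib_left algebra_simps)
  also have "\<dots> = 2 * (1 - cos h)" using assms by simp
  also have "\<dots> \<le> h^2" using one_minus_cos_le[of h] by simp
  finally show ?thesis using abs_le_square_iff by blast
qed

lemma ub_sum:
  fixes X :: "nat \<Rightarrow> nat \<Rightarrow> real"
  assumes norm: "\<forall>n\<le>N. (\<Sum>i<d. (X n i)^2) = 1"
    and inner: "\<forall>n<N. (\<Sum>i<d. X n i * X (Suc n) i) = cos h"
    and low: "\<forall>n\<le>N. \<forall>i<d. m \<le> X n i" and m: "m > 0" and h: "0 \<le> h" "h \<le> m"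
  shows "(\<Sum>n<N. kl d (\<lambda>i. (X n i)^2) (\<lambda>i. (X (Suc n) i)^2)) \<le> real N * (2*h^2 + 2*(h/m)^3)"
proof -
  define E where "E = h / m"
  have E0: "0 \<le> E" "E \<le> 1" using m h by (auto simp: E_def)
  have step: "kl d (\<lambda>i. (X n i)^2) (\<lambda>i. (X (Suc n) i)^2) \<le> 2*h^2 + 2*E^3" if n: "n < N" for n
  proof -
    have "kl d (\<lambda>i. (X n i)^2) (\<lambda>i. (X (Suc n) i)^2) \<le>
        (\<Sum>i<d. 2 * (X n i * X (Suc n) i - (X (Suc n) i)^2) + 3 * (X n i - X (Suc n) i)^2 + 2 * (X (Suc n) i)^2 * E^3)"
      unfolding kl_def
    proof (intro sum_mono kl_point_upper)
      fix i assume i: "i \<in> {..<d}"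
      show "X n i > 0" "X (Suc n) i > 0" using low m n i by (meson le_less_trans less_imp_le_nat less_le_trans Suc_leI lessThan_iff)+
      have "\<bar>X n i - X (Suc n) i\<bar> \<le> \<bar>h\<bar>"
        by (rule X_lip) (use norm inner n i in auto)
      also have "\<bar>h\<bar> = E * m" using m h by (simp add: E_def)
      also have "E * m \<le> E * X (Suc n) i" using low n i E0 by (intro mult_left_mono) auto
      finally show "\<bar>X n i - X (Suc n) i\<bar> \<le> E * X (Suc n) i" .
      show "E \<le> 1" by (rule E0)
    qed
    also have "\<dots> = (\<Sum>i<d. (-4) * (X n i * X (Suc n) i) + 3 * (X n i)^2 + (1 + 2*E^3) * (X (Suc n) i)^2)"
      by (intro sum.cong) (simp_all add: algebra_simps power2_eq_square)
    also have "\<dots> = (-4) * (\<Sum>i<d. X n i * X (Suc n) i) + 3 * (\<Sum>i<d. (X n i)^2) + (1 + 2*E^3) * (\<Sum>i<d. (X (Suc n) i)^2)"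
      by (simp only: sum.distrib sum_distrib_left)
    also have "\<dots> = 4 * (1 - cos h) + 2 * E^3" using norm inner n by (simp add: algebra_simps)
    also have "\<dots> \<le> 2*h^2 + 2*E^3" using one_minus_cos_le[of h] by simp
    finally show ?thesis .
  qed
  have "(\<Sum>n<N. kl d (\<lambda>i. (X n i)^2) (\<lambda>i. (X (Suc n) i)^2)) \<le> (\<Sum>n<N. 2*h^2 + 2*E^3)"
    by (intro sum_mono step) auto
  then show ?thesis by (simp add: E_def)
qed

lemma lb_sum:
  fixes X q :: "nat \<Rightarrow> nat \<Rightarrow> real"
  assumes N: "N = Suc M"
    and norm: "\<forall>n\<le>N. (\<Sum>i<d. (X n i)^2) = 1"
    and inner: "\<forall>n<N. (\<Sum>i<d. X n i * X (Suc n) i) = cos h"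
    and low: "\<forall>n\<le>N. \<forall>i<d. m \<le> X n i" and m: "m > 0"
    and rec: "\<forall>n. Suc n < N \<longrightarrow> (\<forall>i<d. X n i + X (Suc (Suc n)) i = 2 * cos h * X (Suc n) i)"
    and qpos: "\<forall>n\<le>N. \<forall>i<d. q n i > 0" and qsum: "\<forall>n\<le>N. (\<Sum>i<d. q n i) = 1"
    and q0: "\<forall>i<d. q 0 i = (X 0 i)^2" and qN: "\<forall>i<d. q N i = (X N i)^2"
  shows "(\<Sum>n<N. kl d (q n) (q (Suc n))) \<ge>
     real M * (2*(2-2*cos h) - 2*(\<bar>h\<bar>/m)*(2-2*cos h) - 2/3*(\<bar>h\<bar>/m + (2-2*cos h))^3)"
proof -
  define E where "E = \<bar>h\<bar> / m"
  define LB where "LB = -1 + 2*(2-2*cos h) - 2*E*(2-2*cos h) - 2/3*(E + (2-2*cos h))^3"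
  define R where "R = (\<lambda>n i. (X n i)^2 / (X (Suc n) i)^2)"
  define A where "A = (\<lambda>n. \<Sum>i<d. q n i * ln (R n i))"
  define B where "B = (\<lambda>n. \<Sum>i<d. R n i * q (Suc n) i)"
  have Xpos: "X n i > 0" if "n \<le> N" "i < d" for n i using low m that by force
  have Rpos: "R n i > 0" if "n < N" "i < d" for n i
    using Xpos[of n i] Xpos[of "Suc n" i] that by (simp add: R_def)
  have step: "kl d (q n) (q (Suc n)) \<ge> A n + 1 - B n" if n: "n < N" for n
  proof -
    have "kl d (q n) (q (Suc n)) \<ge> (\<Sum>i<d. q n i * ln (R n i) + q n i - R n i * q (Suc n) i)"
      unfolding kl_def
      by (intro sum_mono kl_point_lower) (use qpos Rpos n in auto)
    also have "(\<Sum>i<d. q n i * ln (R n i) + q n i - R n i * q (Suc n) i) = A n + 1 - B n"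
      using qsum n by (simp add: A_def B_def sum.distrib sum_subtractf)
    finally show ?thesis .
  qed
  have A0: "A 0 \<ge> 0"
  proof -
    have "A 0 \<ge> (\<Sum>i<d. (X 0 i)^2 - (X 1 i)^2)"
      unfolding A_def
    proof (intro sum_mono)
      fix i assume i: "i \<in> {..<d}"
      have x0: "X 0 i > 0" and x1: "X 1 i > 0" using Xpos[of 0 i] Xpos[of 1 i] i N by auto
      have "1 - 1 / R 0 i \<le> ln (R 0 i)" by (rule ln_ge_1_minus_inv) (use Rpos[of 0 i] N i in auto)
      then have "(X 0 i)^2 * (1 - 1 / R 0 i) \<le> (X 0 i)^2 * ln (R 0 i)"
        by (intro mult_left_mono) auto
      moreover have "(X 0 i)^2 * (1 - 1 / R 0 i) = (X 0 i)^2 - (X 1 i)^2"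
        using x0 x1 by (simp add: R_def field_simps)
      ultimately show "(X 0 i)^2 - (X 1 i)^2 \<le> q 0 i * ln (R 0 i)" using q0 i by simp
    qed
    also have "(\<Sum>i<d. (X 0 i)^2 - (X 1 i)^2) = 0" using norm N by (simp add: sum_subtractf)
    finally show ?thesis by simp
  qed
  have BM: "B M = 1"
  proof -
    have "B M = (\<Sum>i<d. (X M i)^2)"
      unfolding B_def R_def
    proof (intro sum.cong refl)
      fix i assume "i \<in> {..<d}"
      then have "X N i > 0" "q N i = (X N i)^2" using Xpos[of N i] qN by auto
      then show "(X M i)^2 / (X (Suc M) i)^2 * q (Suc M) i = (X M i)^2" using N by simp
    qed
    then show ?thesis using norm N by simp
  qed
  have mid: "A (Suc n) - B n \<ge> LB" if n: "n < M" for n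
  proof -
    have "A (Suc n) - B n = (\<Sum>i<d. q (Suc n) i * (ln (R (Suc n) i) - R n i))"
      by (simp add: A_def B_def sum_subtractf algebra_simps)
    also have "\<dots> \<ge> (\<Sum>i<d. q (Suc n) i * LB)"
    proof (intro sum_mono mult_left_mono)
      fix i assume i: "i \<in> {..<d}"
      show "0 \<le> q (Suc n) i" using qpos n N i by (simp add: less_imp_le)
      let ?a = "X n i" and ?b = "X (Suc n) i" and ?c = "X (Suc (Suc n)) i"
      have pa: "?a > 0" "?b > 0" "?c > 0" using Xpos n N i by auto
      have "\<bar>?a - ?b\<bar> \<le> \<bar>h\<bar>" by (rule X_lip) (use norm inner n N i in auto)
      then have "\<bar>?a / ?b - 1\<bar> \<le> E"
      proof -
        assume H: "\<bar>?a - ?b\<bar> \<le> \<bar>h\<bar>"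
        have "\<bar>?a / ?b - 1\<bar> = \<bar>?a - ?b\<bar> / ?b" using pa by (simp add: field_simps abs_div)
        also have "\<dots> \<le> \<bar>h\<bar> / m"
          using H pa low n N i m by (intro frac_le) auto
        finally show ?thesis by (simp add: E_def)
      qed
      then have "ln (?b^2 / ?c^2) - ?a^2 / ?b^2 \<ge> LB"
        unfolding LB_def by (intro lo_point) (use pa rec n N i in auto)
      then show "LB \<le> ln (R (Suc n) i) - R n i" by (simp add: R_def)
    qed
    also have "(\<Sum>i<d. q (Suc n) i * LB) = LB" using qsum n N by (simp add: sum_distrib_right[symmetric])
    finally show ?thesis .
  qed
  have "(\<Sum>n<N. kl d (q n) (q (Suc n))) \<ge> (\<Sum>n<N. A n + 1 - B n)"
    by (intro sum_mono step) auto
  also have "(\<Sum>n<N. A n + 1 - B n) = A 0 - B M + real N + (\<Sum>n<M. A (Suc n) - B n)"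
  proof -
    have a: "(\<Sum>n<Suc M. A n) = A 0 + (\<Sum>n<M. A (Suc n))" by (rule sum.lessThan_Suc_shift)
    have b: "(\<Sum>n<Suc M. B n) = (\<Sum>n<M. B n) + B M" by simp
    show ?thesis unfolding N by (simp only: sum.distrib sum_subtractf a b) simp
  qed
  finally have "(\<Sum>n<N. kl d (q n) (q (Suc n))) \<ge> A 0 - B M + real N + (\<Sum>n<M. A (Suc n) - B n)" .
  moreover have "(\<Sum>n<M. A (Suc n) - B n) \<ge> (\<Sum>n<M. LB)" by (intro sum_mono mid) auto
  ultimately have "(\<Sum>n<N. kl d (q n) (q (Suc n))) \<ge> real M * (LB + 1)"
    using A0 BM N by (simp add: algebra_simps)
  moreover have "LB + 1 = 2*(2-2*cos h) - 2*(\<bar>h\<bar>/m)*(2-2*cos h) - 2/3*(\<bar>h\<bar>/m + (2-2*cos h))^3"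
    by (simp add: LB_def E_def)
  ultimately show ?thesis by simp
qed



lemma sin_sub_add_ge:
  fixes t s :: real
  assumes "0 \<le> s" "s \<le> t" "t \<le> pi"
  shows "sin t \<le> sin (t - s) + sin s"
proof -
  have "sin t = sin ((t - s) + s)" by simp
  also have "\<dots> = sin (t - s) * cos s + cos (t - s) * sin s" by (rule sin_add)
  also have "\<dots> \<le> sin (t - s) * 1 + 1 * sin s"
    using assms by (intro add_mono mult_left_mono mult_right_mono) (auto intro: sin_ge_zero)
  finally show ?thesis by simp
qed

lemma cos_rec: "cos (a - h) + cos (a + h) = 2 * cos h * cos (a::real)"
  by (simp add: cos_add cos_diff)

lemma sin_rec: "sin (a - h) + sin (a + h) = 2 * cos h * sin (a::real)"
  by (simp add: sin_add sin_diff)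

lemma slerp_exists:
  fixes u v :: "nat \<Rightarrow> real" and m :: real and N :: nat
  assumes d: "d \<ge> 1" and pos: "\<forall>i<d. u i > 0 \<and> v i > 0"
    and nu: "(\<Sum>i<d. (u i)^2) = 1" and nv: "(\<Sum>i<d. (v i)^2) = 1"
    and mono: "\<forall>i j. i \<le> j \<longrightarrow> j < d \<longrightarrow> u j \<le> u i \<and> v j \<le> v i"
    and N: "N \<ge> 1" and m: "m \<ge> 0" "\<forall>i<d. m \<le> u i \<and> m \<le> v i"
    and h: "h = arccos (\<Sum>i<d. u i * v i) / real N"
  shows "\<exists>X. (\<forall>n\<le>N. (\<Sum>i<d. (X n i)^2) = 1)
      \<and> (\<forall>n<N. (\<Sum>i<d. X n i * X (Suc n) i) = cos h)
      \<and> (\<forall>n\<le>N. \<forall>i<d. m \<le> X n i)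
      \<and> (\<forall>n. Suc n < N \<longrightarrow> (\<forall>i<d. X n i + X (Suc (Suc n)) i = 2 * cos h * X (Suc n) i))
      \<and> (\<forall>i<d. X 0 i = u i \<and> X N i = v i)
      \<and> (\<forall>n\<le>N. \<forall>i j. i \<le> j \<longrightarrow> j < d \<longrightarrow> X n j \<le> X n i)"
proof -
  define c where "c = (\<Sum>i<d. u i * v i)"
  define \<theta> where "\<theta> = arccos c"
  have c0: "c > 0" unfolding c_def using pos d by (intro sum_pos) (auto simp: lessThan_empty_iff)
  have c1: "c \<le> 1"
  proof -
    have "c \<le> (\<Sum>i<d. ((u i)^2 + (v i)^2)/2)"
      unfolding c_def
    proof (intro sum_mono)
      fix i show "u i * v i \<le> ((u i)^2 + (v i)^2)/2"
        using sum_squares_bound[of "u i" "v i"] by (simp add: power2_eq_square)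
    qed
    also have "\<dots> = 1" using nu nv by (simp add: sum_divide_distrib[symmetric] sum.distrib)
    finally show ?thesis .
  qed
  have cth: "cos \<theta> = c" using c0 c1 by (simp add: \<theta>_def)
  have th0: "0 \<le> \<theta>" "\<theta> \<le> pi/2" using c0 c1 arccos_bounded[of c] arccos_le_pi2[of c] by (auto simp: \<theta>_def)
  have hth: "h = \<theta> / real N" by (simp add: h \<theta>_def c_def)
  show ?thesis
  proof (cases "c = 1")
    case True
    have th: "\<theta> = 0" by (simp add: \<theta>_def True)
    then have h0: "h = 0" by (simp add: hth)
    have "(\<Sum>i<d. (u i - v i)^2) = 0"
    proof -
      have "(\<Sum>i<d. (u i - v i)^2) = (\<Sum>i<d. (u i)^2) + (\<Sum>i<d. (v i)^2) - 2 * (\<Sum>i<d. u i * v i)"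
        by (simp add: power2_diff sum.distrib sum_subtractf sum_distrib_left mult.assoc)
      then show ?thesis using nu nv True by (simp add: c_def)
    qed
    then have uv: "\<forall>i<d. u i = v i" by (subst (asm) sum_nonneg_eq_0_iff) auto
    show ?thesis
      by (rule exI[of _ "\<lambda>n. u"]) (use nu uv m mono h0 in \<open>auto simp: power2_eq_square\<close>)
  next
    case False
    then have c1': "c < 1" using c1 by simp
    define sn where "sn = sin \<theta>"
    have sn2: "sn^2 = 1 - c^2" unfolding sn_def using cth by (simp add: sin_squared_eq)
    have snpos: "sn > 0"
      unfolding sn_def \<theta>_def using c0 c1' arccos_lt_bounded[of c] by (intro sin_gt_zero) auto
    define w where "w = (\<lambda>i. (v i - c * u i) / sn)"
    have uw: "(\<Sum>i<d. u i * w i) = 0"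
    proof -
      have "(\<Sum>i<d. u i * w i) = ((\<Sum>i<d. u i * v i) - c * (\<Sum>i<d. (u i)^2)) / sn"
        by (simp add: w_def sum_divide_distrib[symmetric] sum_subtractf sum_distrib_left algebra_simps power2_eq_square)
      then show ?thesis using nu by (simp add: c_def)
    qed
    have ww: "(\<Sum>i<d. (w i)^2) = 1"
    proof -
      have "(\<Sum>i<d. (w i)^2) = ((\<Sum>i<d. (v i)^2) - 2 * c * (\<Sum>i<d. u i * v i) + c^2 * (\<Sum>i<d. (u i)^2)) / sn^2"
        by (simp add: w_def power_divide sum_divide_distrib[symmetric] sum_subtractf sum.distrib
             sum_distrib_left power2_diff algebra_simps power_mult_distrib)
      also have "\<dots> = (1 - c^2) / sn^2" using nu nv by (simp add: c_def power2_eq_square)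
      also have "\<dots> = 1" using sn2 snpos by (metis less_numeral_extra(3) div_self zero_less_power)
      finally show ?thesis .
    qed
    define X where "X = (\<lambda>n i. cos (real n * h) * u i + sin (real n * h) * w i)"
    have Xalt: "X n i = (sin (\<theta> - real n * h) * u i + sin (real n * h) * v i) / sn" for n i
      using snpos unfolding X_def w_def
      by (simp add: field_simps sin_diff sn_def cth)
    have norm: "(\<Sum>i<d. X n i * X n' i) = cos (real n * h) * cos (real n' * h) + sin (real n * h) * sin (real n' * h)" for n n'
    proof -
      have "(\<Sum>i<d. X n i * X n' i) = cos (real n * h) * cos (real n' * h) * (\<Sum>i<d. (u i)^2)
         + (cos (real n * h) * sin (real n' * h) + sin (real n * h) * cos (real n' * h)) * (\<Sum>i<d. u i * w i)
         + sin (real n * h) * sin (real n' * h) * (\<Sum>i<d. (w i)^2)"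
        by (simp add: X_def sum.distrib sum_distrib_left algebra_simps power2_eq_square)
      then show ?thesis using nu uw ww by simp
    qed
    have Nh: "real N * h = \<theta>" using N by (simp add: hth)
    have P1: "\<forall>n\<le>N. (\<Sum>i<d. (X n i)^2) = 1"
    proof (intro allI impI)
      fix n
      have "(\<Sum>i<d. (X n i)^2) = (\<Sum>i<d. X n i * X n i)" by (simp add: power2_eq_square)
      also have "\<dots> = 1" using norm[of n n] sin_cos_squared_add[of "real n * h"] by (simp add: power2_eq_square)
      finally show "(\<Sum>i<d. (X n i)^2) = 1" .
    qed
    have P2: "\<forall>n<N. (\<Sum>i<d. X n i * X (Suc n) i) = cos h"
    proof (intro allI impI)
      fix n
      have "cos h = cos (real (Suc n) * h - real n * h)" by (simp add: algebra_simps)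
      then show "(\<Sum>i<d. X n i * X (Suc n) i) = cos h" using norm[of n "Suc n"] by (simp add: cos_diff)
    qed
    have P3: "\<forall>n\<le>N. \<forall>i<d. m \<le> X n i"
    proof (intro allI impI)
      fix n i assume n: "n \<le> N" and i: "i < d"
      have s0: "0 \<le> real n * h" using th0 N by (simp add: hth)
      have s1: "real n * h \<le> \<theta>"
      proof -
        have "real n * h \<le> real N * h" using n s0 th0 by (intro mult_right_mono) (auto simp: hth)
        then show ?thesis using Nh by simp
      qed
      have a: "sin (\<theta> - real n * h) \<ge> 0" "sin (real n * h) \<ge> 0"
        using s0 s1 th0 by (auto intro!: sin_ge_zero)
      have "m * sn \<le> m * (sin (\<theta> - real n * h) + sin (real n * h))"
        unfolding sn_def using m th0 s0 s1 by (intro mult_left_mono sin_sub_add_ge) auto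
      also have "\<dots> \<le> sin (\<theta> - real n * h) * u i + sin (real n * h) * v i"
        using a m i by (simp add: distrib_left) (intro add_mono; simp add: mult.commute mult_right_mono)
      finally show "m \<le> X n i" using snpos by (simp add: Xalt pos_le_divide_eq)
    qed
    have P4: "\<forall>n. Suc n < N \<longrightarrow> (\<forall>i<d. X n i + X (Suc (Suc n)) i = 2 * cos h * X (Suc n) i)"
    proof (intro allI impI)
      fix n i
      let ?a = "real (Suc n) * h"
      have e1: "real n * h = ?a - h" and e2: "real (Suc (Suc n)) * h = ?a + h" by (simp_all add: algebra_simps)
      have "X n i + X (Suc (Suc n)) i = (cos (?a - h) + cos (?a + h)) * u i + (sin (?a - h) + sin (?a + h)) * w i"
        unfolding X_def e1 e2 by (simp add: algebra_simps)
      also have "\<dots> = 2 * cos h * X (Suc n) i" unfolding cos_rec sin_rec X_def by (simp add: algebra_simps)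
      finally show "X n i + X (Suc (Suc n)) i = 2 * cos h * X (Suc n) i" .
    qed
    have P5: "\<forall>i<d. X 0 i = u i \<and> X N i = v i"
      using snpos by (auto simp: X_def Nh w_def cth sn_def[symmetric])
    have P6: "\<forall>n\<le>N. \<forall>i j. i \<le> j \<longrightarrow> j < d \<longrightarrow> X n j \<le> X n i"
    proof (intro allI impI)
      fix n i j assume n: "n \<le> N" and ij: "i \<le> j" "j < d"
      have s0: "0 \<le> real n * h" using th0 N by (simp add: hth)
      have s1: "real n * h \<le> \<theta>"
      proof -
        have "real n * h \<le> real N * h" using n s0 th0 by (intro mult_right_mono) (auto simp: hth)
        then show ?thesis using Nh by simp
      qed
      have a: "sin (\<theta> - real n * h) \<ge> 0" "sin (real n * h) \<ge> 0"
        using s0 s1 th0 by (auto intro!: sin_ge_zero)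
      have "sin (\<theta> - real n * h) * u j + sin (real n * h) * v j \<le> sin (\<theta> - real n * h) * u i + sin (real n * h) * v i"
        using a mono ij by (intro add_mono mult_left_mono) auto
      then show "X n j \<le> X n i" using snpos by (simp add: Xalt divide_right_mono)
    qed
    show ?thesis using P1 P2 P3 P4 P5 P6 by blast
  qed
qed



lemma thermal_mono:
  assumes "d \<ge> 1" "B \<ge> 0" "sorted_spec d ES" "i \<le> j" "j < d"
  shows "thermal d B ES j \<le> thermal d B ES i"
proof -
  have "ES i \<le> ES j" using assms unfolding sorted_spec_def by blast
  then have "exp (- B * ES j) \<le> exp (- B * ES i)" using assms by (simp add: mult_left_mono)
  moreover have "partition_fn d ES B > 0" using partition_pos[OF assms(1)] by blast
  ultimately show ?thesis unfolding thermal_def by (intro divide_right_mono) auto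
qed

lemma kl_cong: "(\<And>i. i < d \<Longrightarrow> p i = p' i) \<Longrightarrow> (\<And>i. i < d \<Longrightarrow> q i = q' i) \<Longrightarrow> kl d p q = kl d p' q'"
  unfolding kl_def by (intro sum.cong) auto

lemma entropy_cong: "(\<And>i. i < d \<Longrightarrow> p i = p' i) \<Longrightarrow> entropy d p = entropy d p'"
  unfolding entropy_def by (intro arg_cong[where f=uminus] sum.cong) auto

lemma thermal_of_sq:
  assumes "d \<ge> 1" "b > 0" "\<forall>i<d. x i > 0" "(\<Sum>i<d. (x i)^2) = 1" "i < d"
  shows "thermal d b (\<lambda>i. - ln ((x i)^2) / b) i = (x i)^2"
proof -
  have e: "exp (- b * (- ln ((x j)^2) / b)) = (x j)^2" if "j < d" for j
  proof -
    have "x j > 0" using assms that by auto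
    then show ?thesis using assms by simp
  qed
  have "partition_fn d (\<lambda>i. - ln ((x i)^2) / b) b = (\<Sum>j<d. (x j)^2)"
    unfolding partition_fn_def by (rule sum.cong[OF refl], rule e) simp
  then have "partition_fn d (\<lambda>i. - ln ((x i)^2) / b) b = 1" using assms by simp
  then show ?thesis unfolding thermal_def using e[OF assms(5)] by simp
qed

lemma bc_bounds:
  fixes u v :: "nat \<Rightarrow> real"
  assumes d: "d \<ge> 1" and pos: "\<forall>i<d. u i > 0 \<and> v i > 0"
    and nu: "(\<Sum>i<d. (u i)^2) = 1" and nv: "(\<Sum>i<d. (v i)^2) = 1"
  shows "0 < (\<Sum>i<d. u i * v i)" "(\<Sum>i<d. u i * v i) \<le> 1"
proof -
  show "0 < (\<Sum>i<d. u i * v i)" using pos d by (intro sum_pos) (auto simp: lessThan_empty_iff)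
  have "(\<Sum>i<d. u i * v i) \<le> (\<Sum>i<d. ((u i)^2 + (v i)^2)/2)"
  proof (intro sum_mono)
    fix i show "u i * v i \<le> ((u i)^2 + (v i)^2)/2"
      using sum_squares_bound[of "u i" "v i"] by (simp add: power2_eq_square)
  qed
  also have "\<dots> = 1" using nu nv by (simp add: sum_divide_distrib[symmetric] sum.distrib)
  finally show "(\<Sum>i<d. u i * v i) \<le> 1" .
qed

lemma lb_arith:
  fixes h m :: real
  assumes "0 \<le> h" "h \<le> 1" "m > 0"
  shows "2*(2-2*cos h) - 2*(\<bar>h\<bar>/m)*(2-2*cos h) - 2/3*(\<bar>h\<bar>/m + (2-2*cos h))^3
         \<ge> 2*h^2 - (1/6 + 2/m + 2/3*(1/m+1)^3) * h^3"
proof -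
  define dl where "dl = 2 - 2*cos h"
  have dl1: "dl \<le> h^2" using one_minus_cos_le[of h] by (simp add: dl_def)
  have dl2: "h^2 - h^4/12 \<le> dl" using one_minus_cos_ge[of h] assms by (simp add: dl_def)
  have dl0: "0 \<le> dl" using cos_le_one[of h] by (simp add: dl_def)
  have h43: "h^4 \<le> h^3" using assms by (intro power_decreasing) auto
  have t1: "2*dl \<ge> 2*h^2 - h^3/6" using dl2 h43 by linarith
  have t2: "2*(h/m)*dl \<le> (2/m) * h^3"
  proof -
    have "2*(h/m)*dl \<le> 2*(h/m)*h^2" using dl1 assms by (intro mult_left_mono) auto
    then show ?thesis by (simp add: power2_eq_square power3_eq_cube)
  qed
  have t3: "(h/m + dl)^3 \<le> (1/m+1)^3 * h^3"
  proof -
    have "h^2 \<le> h" using assms by (simp add: power2_eq_square mult_left_le_one_le)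
    then have "h/m + dl \<le> h * (1/m + 1)" using dl1 by (simp add: algebra_simps)
    then have "(h/m + dl)^3 \<le> (h * (1/m + 1))^3" using dl0 assms by (intro power_mono) auto
    then show ?thesis by (simp add: power_mult_distrib mult.commute)
  qed
  show ?thesis using t1 t2 t3 assms unfolding dl_def[symmetric] by (simp add: algebra_simps)
qed



lemma main_bounds:
  fixes d N :: nat and b lam :: real and ES :: "nat \<Rightarrow> real"
  assumes d: "d \<ge> 1" and b: "b > 0" and lam: "lam > 1" and sorted: "sorted_spec d ES"
    and N: "N \<ge> 1"
  defines "p0 \<equiv> thermal d b ES" and "pN \<equiv> thermal d (lam*b) ES"
  defines "u \<equiv> \<lambda>i. sqrt (p0 i)" and "v \<equiv> \<lambda>i. sqrt (pN i)"
  defines "\<theta> \<equiv> arccos (\<Sum>i<d. u i * v i)"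
    and "m \<equiv> Min ((\<lambda>i. min (u i) (v i)) ` {..<d})"
    and "dS \<equiv> entropy d p0 - entropy d pN"
  defines "K \<equiv> 1/6 + 2/m + 2/3*(1/m+1)^3"
  assumes hm: "\<theta> / real N \<le> m"
  shows "(\<exists>EM. admissible d b lam ES N EM \<and>
            b * Delta_E_M d b ES EM N \<le> dS + 2*\<theta>^2/N + 2*\<theta>^3/m^3/N^2)
       \<and> (\<forall>EM. admissible d b lam ES N EM \<longrightarrow>
            b * Delta_E_M d b ES EM N \<ge> dS + 2*\<theta>^2/N - (2*\<theta>^2 + K*\<theta>^3)/N^2)"
proof -
  have lb0: "lam * b \<ge> 0" using lam b by simp
  have p0pos: "p0 i > 0" and pNpos: "pN i > 0" for i
    using thermal_pos[OF d] by (simp_all add: p0_def pN_def)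
  have upos: "\<forall>i<d. u i > 0 \<and> v i > 0" using p0pos pNpos by (simp add: u_def v_def)
  have usq: "(u i)^2 = p0 i" "(v i)^2 = pN i" for i
    using p0pos[of i] pNpos[of i] by (simp_all add: u_def v_def less_imp_le)
  have nu: "(\<Sum>i<d. (u i)^2) = 1" "(\<Sum>i<d. (v i)^2) = 1"
    using thermal_sum[OF d] by (simp_all add: usq p0_def pN_def)
  have mono: "\<forall>i j. i \<le> j \<longrightarrow> j < d \<longrightarrow> u j \<le> u i \<and> v j \<le> v i"
    using thermal_mono[OF d _ sorted] b lb0 by (auto simp: u_def v_def p0_def pN_def)
  have fin: "finite ((\<lambda>i. min (u i) (v i)) ` {..<d})" "(\<lambda>i. min (u i) (v i)) ` {..<d} \<noteq> {}"
    using d by (auto simp: lessThan_empty_iff)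
  have m0: "m > 0" unfolding m_def using fin upos by (subst Min_gr_iff) auto
  have mle: "\<forall>i<d. m \<le> u i \<and> m \<le> v i"
  proof (intro allI impI)
    fix i assume "i < d"
    then have "m \<le> min (u i) (v i)" unfolding m_def using fin by (intro Min_le) auto
    then show "m \<le> u i \<and> m \<le> v i" by simp
  qed
  have m1: "m \<le> 1"
  proof -
    have "(u 0)^2 \<le> (\<Sum>i<d. (u i)^2)" using d by (intro member_le_sum) auto
    then have "(u 0)^2 \<le> 1" using nu by simp
    then have "u 0 \<le> 1" using upos d by (simp add: power_le_one_iff abs_square_le_1)
    then show ?thesis using mle d by force
  qed
  define c where "c = (\<Sum>i<d. u i * v i)"
  have c: "0 < c" "c \<le> 1" using bc_bounds[OF d upos nu] by (simp_all add: c_def)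
  have th0: "0 \<le> \<theta>" using arccos_bounded[of c] c by (simp add: \<theta>_def c_def)
  define h where "h = \<theta> / real N"
  have h0: "0 \<le> h" using th0 by (simp add: h_def)
  have hm': "h \<le> m" using hm by (simp add: h_def)
  have h1: "h \<le> 1" using hm' m1 by simp
  have Npos: "real N > 0" using N by simp
  obtain X where
      X1: "\<forall>n\<le>N. (\<Sum>i<d. (X n i)^2) = 1"
    and X2: "\<forall>n<N. (\<Sum>i<d. X n i * X (Suc n) i) = cos h"
    and X3: "\<forall>n\<le>N. \<forall>i<d. m \<le> X n i"
    and X4: "\<forall>n. Suc n < N \<longrightarrow> (\<forall>i<d. X n i + X (Suc (Suc n)) i = 2 * cos h * X (Suc n) i)"
    and X5: "\<forall>i<d. X 0 i = u i \<and> X N i = v i"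
    and X6: "\<forall>n\<le>N. \<forall>i j. i \<le> j \<longrightarrow> j < d \<longrightarrow> X n j \<le> X n i"
    using slerp_exists[OF d upos nu mono N less_imp_le[OF m0] mle, of h] by (auto simp: h_def \<theta>_def)
  have Xpos: "X n i > 0" if "n \<le> N" "i < d" for n i using X3 m0 that by force
  define EMu where "EMu = (\<lambda>n i. - ln ((X n i)^2) / b)"
  define Qu where "Qu = (\<lambda>n. thermal d b (if n = 0 then ES else EMu n))"
  have Qu: "Qu n i = (X n i)^2" if "n \<le> N" "i < d" for n i
  proof (cases "n = 0")
    case True
    then show ?thesis using X5 that by (simp add: Qu_def usq p0_def)
  next
    case False
    have "thermal d b (\<lambda>i. - ln ((X n i)^2) / b) i = (X n i)^2"
      using that Xpos X1 by (intro thermal_of_sq[OF d b]) auto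
    then show ?thesis unfolding Qu_def EMu_def using False by simp
  qed
  have admu: "admissible d b lam ES N EMu"
    unfolding admissible_def
  proof (intro conjI ballI allI impI)
    fix n assume n: "n \<in> {1..N}"
    show "sorted_spec d (EMu n)" unfolding sorted_spec_def
    proof (intro allI impI)
      fix i j assume ij: "i \<le> j" "j < d"
      have "X n j \<le> X n i" using X6 n ij by auto
      moreover have "X n j > 0" using Xpos n ij by auto
      ultimately have "ln ((X n j)^2) \<le> ln ((X n i)^2)" by (simp add: power_mono)
      then show "EMu n i \<le> EMu n j" unfolding EMu_def using b by (simp add: divide_right_mono)
    qed
  next
    fix i assume i: "i < d"
    have "final_S_pop d b ES EMu N i = thermal d b (EMu N) i" by (rule final_pop[OF d N i])
    also have "\<dots> = Qu N i" using N by (simp add: Qu_def)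
    also have "\<dots> = (v i)^2" using Qu[of N i] X5 i by simp
    finally show "final_S_pop d b ES EMu N i = thermal d (lam * b) ES i" by (simp add: usq pN_def)
  qed
  have costu: "b * Delta_E_M d b ES EMu N = dS + (\<Sum>n<N. kl d (\<lambda>i. (X n i)^2) (\<lambda>i. (X (Suc n) i)^2))"
  proof -
    have "b * Delta_E_M d b ES EMu N = entropy d (Qu 0) - entropy d (Qu N) + (\<Sum>n<N. kl d (Qu n) (Qu (Suc n)))"
      unfolding Qu_def by (rule cost_formula[OF d N])
    also have "entropy d (Qu 0) = entropy d p0" by (simp add: Qu_def p0_def)
    also have "entropy d (Qu N) = entropy d pN"
      by (rule entropy_cong) (use Qu X5 in \<open>auto simp: usq\<close>)
    also have "(\<Sum>n<N. kl d (Qu n) (Qu (Suc n))) = (\<Sum>n<N. kl d (\<lambda>i. (X n i)^2) (\<lambda>i. (X (Suc n) i)^2))"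
      by (intro sum.cong refl kl_cong) (auto simp: Qu)
    finally show ?thesis by (simp add: dS_def)
  qed
  have "(\<Sum>n<N. kl d (\<lambda>i. (X n i)^2) (\<lambda>i. (X (Suc n) i)^2)) \<le> real N * (2*h^2 + 2*(h/m)^3)"
    by (rule ub_sum[OF X1 X2 X3 m0 h0 hm'])
  also have "real N * (2*h^2 + 2*(h/m)^3) = 2*\<theta>^2/N + 2*\<theta>^3/m^3/N^2"
    using Npos m0 by (simp add: h_def field_simps power2_eq_square power3_eq_cube)
  finally have UB: "\<exists>EM. admissible d b lam ES N EM \<and>
            b * Delta_E_M d b ES EM N \<le> dS + 2*\<theta>^2/N + 2*\<theta>^3/m^3/N^2"
    using admu costu by auto
  have LB: "b * Delta_E_M d b ES EM N \<ge> dS + 2*\<theta>^2/N - (2*\<theta>^2 + K*\<theta>^3)/N^2"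
    if adm: "admissible d b lam ES N EM" for EM
  proof -
    define Q where "Q = (\<lambda>n. thermal d b (if n = 0 then ES else EM n))"
    obtain M where M: "N = Suc M" using N by (cases N) auto
    have QN: "Q N i = pN i" if "i < d" for i
    proof -
      have "Q N i = thermal d b (EM N) i" using N by (simp add: Q_def)
      also have "\<dots> = final_S_pop d b ES EM N i" by (rule final_pop[OF d N that, symmetric])
      also have "\<dots> = pN i" using adm that by (simp add: admissible_def pN_def)
      finally show ?thesis .
    qed
    have cost: "b * Delta_E_M d b ES EM N = dS + (\<Sum>n<N. kl d (Q n) (Q (Suc n)))"
    proof -
      have "b * Delta_E_M d b ES EM N = entropy d (Q 0) - entropy d (Q N) + (\<Sum>n<N. kl d (Q n) (Q (Suc n)))"
        unfolding Q_def by (rule cost_formula[OF d N])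
      also have "entropy d (Q 0) = entropy d p0" by (simp add: Q_def p0_def)
      also have "entropy d (Q N) = entropy d pN" by (rule entropy_cong) (simp add: QN)
      finally show ?thesis by (simp add: dS_def)
    qed
    have "(\<Sum>n<N. kl d (Q n) (Q (Suc n))) \<ge>
       real M * (2*(2-2*cos h) - 2*(\<bar>h\<bar>/m)*(2-2*cos h) - 2/3*(\<bar>h\<bar>/m + (2-2*cos h))^3)"
    proof (rule lb_sum[OF M X1 X2 X3 m0 X4])
      show "\<forall>n\<le>N. \<forall>i<d. Q n i > 0" using thermal_pos[OF d] by (simp add: Q_def)
      show "\<forall>n\<le>N. (\<Sum>i<d. Q n i) = 1" using thermal_sum[OF d] by (simp add: Q_def)
      show "\<forall>i<d. Q 0 i = (X 0 i)^2" using X5 by (simp add: Q_def usq p0_def)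
      show "\<forall>i<d. Q N i = (X N i)^2" using X5 QN by (simp add: usq)
    qed
    moreover have "real M * (2*(2-2*cos h) - 2*(\<bar>h\<bar>/m)*(2-2*cos h) - 2/3*(\<bar>h\<bar>/m + (2-2*cos h))^3)
        \<ge> real M * (2*h^2 - K * h^3)"
      using lb_arith[OF h0 h1 m0] by (intro mult_left_mono) (auto simp: K_def)
    moreover have "real M * (2*h^2 - K * h^3) \<ge> 2*\<theta>^2/N - (2*\<theta>^2 + K*\<theta>^3)/N^2"
    proof -
      have K0: "K \<ge> 0" using m0 by (simp add: K_def)
      have "real M * (K * h^3) \<le> real N * (K * h^3)" using M K0 h0 by (intro mult_right_mono) auto
      moreover have "real M * (2*h^2) = 2*\<theta>^2/N - 2*\<theta>^2/N^2"
      proof -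
        have e: "real M = real N - 1" using M by simp
        show ?thesis unfolding e using Npos by (simp add: h_def field_simps power2_eq_square)
      qed
      moreover have "real N * (K * h^3) = K*\<theta>^3/N^2"
        using Npos by (simp add: h_def field_simps power2_eq_square power3_eq_cube)
      ultimately show ?thesis by (simp add: algebra_simps add_divide_distrib diff_divide_distrib)
    qed
    ultimately show ?thesis using cost by linarith
  qed
  show ?thesis using UB LB by blast
qed



lemma sqrt_exp: "sqrt (exp x) = exp (x / 2)"
  by (rule real_sqrt_unique) (simp_all add: power2_eq_square exp_add[symmetric])

lemma Lstar_Z:
  assumes d: "d \<ge> 1"
  shows "(\<Sum>i<d. sqrt (thermal d b ES i) * sqrt (thermal d (lam * b) ES i)) =
     partition_fn d ES (b * (1 + lam) / 2) / sqrt (partition_fn d ES b * partition_fn d ES (lam * b))"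
proof -
  have Z: "partition_fn d ES b > 0" "partition_fn d ES (lam * b) > 0" using partition_pos[OF d] by auto
  have "(\<Sum>i<d. sqrt (thermal d b ES i) * sqrt (thermal d (lam * b) ES i)) =
      (\<Sum>i<d. exp (- (b * (1 + lam) / 2) * ES i) / sqrt (partition_fn d ES b * partition_fn d ES (lam * b)))"
  proof (intro sum.cong refl)
    fix i
    have "exp (- b * ES i / 2) * exp (- (lam * b) * ES i / 2) = exp (- (b * (1 + lam) / 2) * ES i)"
      by (simp add: exp_add[symmetric] algebra_simps add_divide_distrib)
    then show "sqrt (thermal d b ES i) * sqrt (thermal d (lam * b) ES i) =
       exp (- (b * (1 + lam) / 2) * ES i) / sqrt (partition_fn d ES b * partition_fn d ES (lam * b))"
      unfolding thermal_def real_sqrt_divide sqrt_exp real_sqrt_mult by simp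
  qed
  also have "\<dots> = partition_fn d ES (b * (1 + lam) / 2) / sqrt (partition_fn d ES b * partition_fn d ES (lam * b))"
    by (simp add: partition_fn_def sum_divide_distrib)
  finally show ?thesis .
qed

theorem theorem1:
  fixes d :: nat and b lam :: real and ES :: "nat \<Rightarrow> real"
  assumes "d \<ge> 1" and "b > 0" and "lam > 1"
    and "ES 0 = 0" and "sorted_spec d ES"
  shows "(\<lambda>N::nat. min_cost d b lam ES N
            - (entropy d (thermal d b ES) - entropy d (thermal d (lam * b) ES))
            - (Lstar d b lam ES)^2 / (2 * real N))
           \<in> O(\<lambda>N. 1 / (real N)^2)
         \<and> Lstar d b lam ES =
             2 * arccos (partition_fn d ES (b * (1 + lam) / 2)
                         / sqrt (partition_fn d ES b * partition_fn d ES (lam * b)))"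
proof
  note d = assms(1) and b = assms(2) and lam = assms(3) and sorted = assms(5)
  show "Lstar d b lam ES =
             2 * arccos (partition_fn d ES (b * (1 + lam) / 2)
                         / sqrt (partition_fn d ES b * partition_fn d ES (lam * b)))"
    unfolding Lstar_def Lstar_Z[OF d] ..
  define p0 where "p0 = thermal d b ES"
  define pN where "pN = thermal d (lam*b) ES"
  define u where "u = (\<lambda>i. sqrt (p0 i))"
  define v where "v = (\<lambda>i. sqrt (pN i))"
  define \<theta> where "\<theta> = arccos (\<Sum>i<d. u i * v i)"
  define m where "m = Min ((\<lambda>i. min (u i) (v i)) ` {..<d})"
  define dS where "dS = entropy d p0 - entropy d pN"
  define K where "K = 1/6 + 2/m + 2/3*(1/m+1)^3"
  define C where "C = max (2*\<theta>^3/m^3) (2*\<theta>^2 + K*\<theta>^3)"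
  have m0: "m > 0"
  proof -
    have fin: "finite ((\<lambda>i. min (u i) (v i)) ` {..<d})" "(\<lambda>i. min (u i) (v i)) ` {..<d} \<noteq> {}"
      using d by (auto simp: lessThan_empty_iff)
    have "\<forall>i<d. u i > 0 \<and> v i > 0"
      using thermal_pos[OF d] by (simp add: u_def v_def p0_def pN_def)
    then show ?thesis unfolding m_def using fin by (subst Min_gr_iff) auto
  qed
  have L: "Lstar d b lam ES = 2 * \<theta>"
    by (simp add: Lstar_def \<theta>_def u_def v_def p0_def pN_def)
  define N0 where "N0 = max 1 (nat \<lceil>\<theta> / m\<rceil>)"
  have bound: "\<bar>min_cost d b lam ES N - dS - (Lstar d b lam ES)^2 / (2 * real N)\<bar> \<le> C * \<bar>1 / (real N)^2\<bar>"
    if N: "N \<ge> N0" for N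
  proof -
    have N1: "N \<ge> 1" using N by (simp add: N0_def)
    have Npos: "real N > 0" using N1 by simp
    have "\<theta> / m \<le> real N"
    proof -
      have "\<theta> / m \<le> real (nat \<lceil>\<theta> / m\<rceil>)" by linarith
      also have "\<dots> \<le> real N" using N by (simp add: N0_def)
      finally show ?thesis .
    qed
    then have hm: "\<theta> / real N \<le> m" using m0 Npos by (simp add: field_simps)
    have MB: "(\<exists>EM. admissible d b lam ES N EM \<and>
            b * Delta_E_M d b ES EM N \<le> dS + 2*\<theta>^2/N + 2*\<theta>^3/m^3/N^2)
       \<and> (\<forall>EM. admissible d b lam ES N EM \<longrightarrow>
            b * Delta_E_M d b ES EM N \<ge> dS + 2*\<theta>^2/N - (2*\<theta>^2 + K*\<theta>^3)/N^2)"
      using hm unfolding K_def dS_def m_def \<theta>_def u_def v_def p0_def pN_def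
      by (rule main_bounds[OF d b lam sorted N1])
    define S where "S = {b * Delta_E_M d b ES EM N | EM. admissible d b lam ES N EM}"
    have mc: "min_cost d b lam ES N = Inf S" by (simp add: min_cost_def S_def)
    obtain x where x: "x \<in> S" "x \<le> dS + 2*\<theta>^2/N + 2*\<theta>^3/m^3/N^2"
      using MB unfolding S_def by blast
    have lo: "\<forall>y\<in>S. dS + 2*\<theta>^2/N - (2*\<theta>^2 + K*\<theta>^3)/N^2 \<le> y"
      using MB unfolding S_def by blast
    have f1: "Inf S \<le> x" using x lo by (intro cInf_lower) (auto simp: bdd_below_def)
    have f2: "Inf S \<ge> dS + 2*\<theta>^2/N - (2*\<theta>^2 + K*\<theta>^3)/N^2"
      using x lo by (intro cInf_greatest) auto
    have f3: "(Lstar d b lam ES)^2 / (2 * real N) = 2*\<theta>^2/N"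
      unfolding L using Npos by (simp add: power2_eq_square field_simps)
    have c1: "2*\<theta>^3/m^3 \<le> C" "2*\<theta>^2 + K*\<theta>^3 \<le> C" by (simp_all add: C_def)
    have f4: "2*\<theta>^3/m^3/N^2 \<le> C / N^2" using c1(1) by (intro divide_right_mono) auto
    have f5: "(2*\<theta>^2 + K*\<theta>^3)/N^2 \<le> C / N^2" using c1(2) by (intro divide_right_mono) auto
    have "\<bar>min_cost d b lam ES N - dS - (Lstar d b lam ES)^2 / (2 * real N)\<bar> \<le> C / N^2"
      unfolding mc f3 abs_le_iff using f1 f2 f4 f5 x(2) by linarith
    then show ?thesis by simp
  qed
  show "(\<lambda>N::nat. min_cost d b lam ES N
            - (entropy d (thermal d b ES) - entropy d (thermal d (lam * b) ES))
            - (Lstar d b lam ES)^2 / (2 * real N))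
           \<in> O(\<lambda>N. 1 / (real N)^2)"
  proof (rule bigoI)
    show "\<forall>\<^sub>F N in at_top. norm (min_cost d b lam ES N
            - (entropy d (thermal d b ES) - entropy d (thermal d (lam * b) ES))
            - (Lstar d b lam ES)^2 / (2 * real N)) \<le> C * norm (1 / (real N)^2)"
      unfolding eventually_at_top_linorder
      using bound by (auto simp: dS_def p0_def pN_def)
  qed
qed


end
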